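(* Let $\mathcal{X}\subset\mathbb{R}^d$ be a compact hyperrectangle, $\mathbf{F}=(f_1,\dots,f_M):\mathcal{X}\to\mathbb{R}^M$, and $\mathcal{X}^\star$ the Pareto set of $\mathbf{F}$ (for minimization). Let $\mathcal{S}_t$ be the set of points sampled by the algorithm MOHOLLM described in the context up to iteration $t$, and assume Assumptions (A1)–(A5) of the context hold. Let $\mathbf{r}\in\mathbb{R}^M$ be a reference point dominated by every point of $\mathbf{F}(\mathcal{X})$. Then $HV(\mathbf{F}(\mathcal{S}_t))\to HV(\mathbf{F}(\mathcal{X}^\star))$ almost surely as $t\to\infty$.
   Context: Pareto dominance: $x\prec x'$ iff $f_i(x)\le f_i(x')$ for all $i$ and $f_j(x)<f_j(x')$ for some $j$; the Pareto set is $\mathcal{X}^\star=\{x\in\mathcal{X}:\nexists x'\in\mathcal{X},\ x'\prec x\}$. Hypervolume: for $\mathcal{Y}\subset\mathbb{R}^M$, $HV(\mathcal{Y})$ is the Lebesgue measure of $\bigcup_{\mathbf{y}\in\mathcal{Y}}\{\mathbf{z}\in\mathbb{R}^M:\mathbf{y}\preceq\mathbf{z}\preceq\mathbf{r}\}$ (componentwise order). The algorithm: at each iteration $t$ it maintains a hierarchical partition of $\mathcal{X}$ (a KD-tree with axis-aligned splits), whose leaves $\{R_1,\dots,R_{K_t}\}$ are disjoint hyperrectangular regions covering $\mathcal{X}$. Each leaf $R_k$ is selected at iteration $t$ with probability $\pi_k(t)$; inside each selected leaf $R_j$, new points are generated by a sampler (an LLM) from a conditional density $p(x\mid R_j)$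 and added to the sample set $\mathcal{S}_t$. Leaves may be split over time. Assumptions: (A1) each $f_i$ is Lipschitz continuous. (A2) For any infinite sequence of nested regions $R_1\supset R_2\supset\cdots$ generated along a branch of the tree, $\lim_{t\to\infty}\mathrm{diam}(R_t)=0$. (A3) For any leaf region $R_k$ created at iteration $t_0$, $\sum_{t=t_0}^{\infty}\pi_k(t)=\infty$ almost surely. (A4) Any leaf region selected infinitely often is split infinitely often, producing child regions of strictly smaller diameter. (A5) There exists $\eta>0$ such that for any selected region $R_j$ and any measurable ball $B\subset R_j$, $\int_B p(x\mid R_j)\,dx\ge \eta\,\mathrm{vol}(B)/\mathrm{vol}(R_j)$. *)

theory Defs
  imports "HOL-Analysis.Analysis" "HOL-Probability.Probability"
begin

definition pareto_dom :: "real^'m \<Rightarrow> real^'m \<Rightarrow> bool" where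
  "pareto_dom y y' \<longleftrightarrow> (\<forall>i. y $ i \<le> y' $ i) \<and> (\<exists>j. y $ j < y' $ j)"

definition pareto_set :: "('a \<Rightarrow> real^'m) \<Rightarrow> 'a set \<Rightarrow> 'a set" where
  "pareto_set F X = {x \<in> X. \<not> (\<exists>x'\<in>X. pareto_dom (F x') (F x))}"

definition hypervolume :: "real^'m \<Rightarrow> (real^'m) set \<Rightarrow> real" where
  "hypervolume r Y = measure lebesgue
     (\<Union>y\<in>Y. {z. (\<forall>i. y $ i \<le> z $ i) \<and> (\<forall>i. z $ i \<le> r $ i)})"

definition hyperrect :: "'a::euclidean_space set \<Rightarrow> bool" where
  "hyperrect R \<longleftrightarrow> (\<exists>lo hi. R = cbox lo hi \<and> box lo hi \<noteq> {})"

end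

theory Submission
  imports Defs
begin

lemma levy0:
  fixes M :: "'w measure" and G :: "nat \<Rightarrow> 'w measure" and A :: "nat \<Rightarrow> 'w set"
    and p :: "nat \<Rightarrow> 'w \<Rightarrow> real"
  assumes P: "prob_space M"
    and subalg: "\<And>t. subalgebra M (G t)"
    and monoG1: "\<And>t. sets (G t) \<subseteq> sets (G (Suc t))"
    and A: "\<And>t. A t \<in> sets (G (Suc t))"
    and pm: "\<And>t. p t \<in> borel_measurable (G t)"
    and pce: "\<And>t. AE \<omega> in M. p t \<omega> = real_cond_exp M (G t) (indicator (A t)) \<omega>"
  shows "AE \<omega> in M. \<not> summable (\<lambda>t. p t \<omega>) \<longrightarrow> (\<exists>t. \<omega> \<in> A t)"
proof -
  interpret prob_space M by (rule P)
  have sfs: "sigma_finite_subalgebra M (G t)" for t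
    using finite_measure_subalgebra_is_sigma_finite subalg finite_measure_axioms
    unfolding finite_measure_subalgebra_def finite_measure_subalgebra_axioms_def by blast
  have monoG: "sets (G s) \<subseteq> sets (G t)" if "s \<le> t" for s t
    using lift_Suc_mono_le[of "\<lambda>t. sets (G t)", OF monoG1 that] .
  have spG: "space (G t) = space M" for t using subalg[of t] by (simp add: subalgebra_def)
  have setsG: "sets (G t) \<subseteq> sets M" for t using subalg[of t] by (simp add: subalgebra_def)
  have AM: "A t \<in> sets M" for t using A setsG by blast
  have measG: "f \<in> borel_measurable (G t)" if "f \<in> borel_measurable (G s)" "s \<le> t" for f :: "'w \<Rightarrow> real" and s t
    using measurable_mono[OF order_refl refl monoG[OF that(2)] spG[of s, unfolded spG[of t, symmetric]]] that(1)
    by blast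
  have measM: "f \<in> borel_measurable M" if "f \<in> borel_measurable (G s)" for f :: "'w \<Rightarrow> real" and s
    using measurable_from_subalg[OF subalg that] .
  have intind: "integrable M (indicator (A t) :: 'w \<Rightarrow> real)" for t
    using AM by (intro integrable_real_indicator) (auto simp: emeasure_eq_measure)
  define q where "q t \<omega> = max 0 (min 1 (p t \<omega>))" for t \<omega>
  have q01: "0 \<le> q t \<omega>" "q t \<omega> \<le> 1" for t \<omega> unfolding q_def by auto
  have qm: "q t \<in> borel_measurable (G t)" for t unfolding q_def using pm[of t] by measurable
  have qp_t: "AE \<omega> in M. q t \<omega> = p t \<omega>" for t
  proof -
    have "AE \<omega> in M. 0 \<le> real_cond_exp M (G t) (indicator (A t)) \<omega>"
      by (rule sigma_finite_subalgebra.real_cond_exp_ge_c[OF sfs intind]) auto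
    moreover have "AE \<omega> in M. real_cond_exp M (G t) (indicator (A t)) \<omega> \<le> 1"
      by (rule sigma_finite_subalgebra.real_cond_exp_le_c[OF sfs intind]) (auto simp: indicator_def)
    ultimately show ?thesis using pce[of t] by eventually_elim (auto simp: q_def)
  qed
  have qp: "AE \<omega> in M. \<forall>t. q t \<omega> = p t \<omega>" using qp_t by (simp add: AE_all_countable)
  define S where "S n \<omega> = (\<Sum>t<n. q t \<omega>)" for n \<omega>
  have Sm: "S n \<in> borel_measurable (G n)" for n
    unfolding S_def by (intro borel_measurable_sum measG[OF qm]) auto
  have S_le: "S n \<omega> \<le> n" for n \<omega>
  proof -
    have "S n \<omega> \<le> (\<Sum>t<n. 1)" unfolding S_def by (intro sum_mono q01)
    then show ?thesis by simp
  qed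
  have S_ge: "0 \<le> S n \<omega>" for n \<omega> unfolding S_def using q01 by (simp add: sum_nonneg)
  have S_mono: "S n \<omega> \<le> S m \<omega>" if "n \<le> m" for n m \<omega>
    unfolding S_def using that q01 by (intro sum_mono2) auto
  define B where "B n = space M - (\<Union>t<n. A t)" for n
  have BG: "B n \<in> sets (G n)" for n
  proof -
    have "A t \<in> sets (G n)" if "t < n" for t using A[of t] monoG[of "Suc t" n] that by auto
    then have "(\<Union>t<n. A t) \<in> sets (G n)" by auto
    then show ?thesis unfolding B_def using sets.compl_sets[of "\<Union>t<n. A t" "G n"] spG by simp
  qed
  have BM: "B n \<in> sets M" for n using BG setsG by blast
  have bint: "integrable M f" if "f \<in> borel_measurable M" "\<And>x. x \<in> space M \<Longrightarrow> \<bar>f x\<bar> \<le> C" for f :: "'w \<Rightarrow> real" and C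
    by (rule integrable_const_bound[where B=C]) (use that in auto)
  have key: "(\<integral>\<omega>. indicator (B n) \<omega> * exp (S n \<omega>) \<partial>M) \<le> 1" for n
  proof (induction n)
    case 0
    have "(\<integral>\<omega>. indicator (B 0) \<omega> * exp (S 0 \<omega>) \<partial>M) = (\<integral>\<omega>. indicator (space M) \<omega> \<partial>M)"
      unfolding B_def S_def by simp
    also have "\<dots> = 1" using prob_space by (simp add: integral_indicator)
    finally show ?case by simp
  next
    case (Suc n)
    define f where "f \<omega> = indicator (B n) \<omega> * exp (S n \<omega> + q n \<omega>)" for \<omega>
    have fG: "f \<in> borel_measurable (G n)" unfolding f_def using BG Sm qm by measurable
    have fM: "f \<in> borel_measurable M" using measM[OF fG] .
    have fb: "\<bar>f \<omega>\<bar> \<le> exp (n + 1)" for \<omega>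
      unfolding f_def using S_le[of n \<omega>] q01[of n \<omega>] by (auto simp: indicator_def)
    have ifA: "integrable M (\<lambda>\<omega>. f \<omega> * indicator (A n) \<omega>)"
      by (rule bint[of _ "exp (n+1)"]) (use fM AM fb in \<open>auto simp: indicator_def abs_mult\<close>)
    have ifq: "integrable M (\<lambda>\<omega>. f \<omega> * q n \<omega>)"
    proof (rule bint[of _ "exp (n+1)"])
      show "(\<lambda>\<omega>. f \<omega> * q n \<omega>) \<in> borel_measurable M" using fM measM[OF qm] by measurable
      fix \<omega>
      have "\<bar>f \<omega> * q n \<omega>\<bar> = \<bar>f \<omega>\<bar> * q n \<omega>" using q01 by (simp add: abs_mult)
      also have "\<dots> \<le> \<bar>f \<omega>\<bar> * 1" using q01[of n \<omega>] by (intro mult_left_mono) auto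
      finally show "\<bar>f \<omega> * q n \<omega>\<bar> \<le> exp (n+1)" using fb[of \<omega>] by simp
    qed
    have intf: "integrable M f" by (rule bint[of _ "exp (n+1)"]) (use fM fb in auto)
    have e1: "(\<integral>\<omega>. f \<omega> * indicator (A n) \<omega> \<partial>M) = (\<integral>\<omega>. f \<omega> * real_cond_exp M (G n) (indicator (A n)) \<omega> \<partial>M)"
      using sigma_finite_subalgebra.real_cond_exp_intg(2)[OF sfs ifA fG] AM by simp
    also have "\<dots> = (\<integral>\<omega>. f \<omega> * q n \<omega> \<partial>M)"
    proof (rule integral_cong_AE)
      show "(\<lambda>\<omega>. f \<omega> * real_cond_exp M (G n) (indicator (A n)) \<omega>) \<in> borel_measurable M"
        using fM borel_measurable_cond_exp2 by measurable
      show "(\<lambda>\<omega>. f \<omega> * q n \<omega>) \<in> borel_measurable M" using fM measM[OF qm] by measurable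
      show "AE \<omega> in M. f \<omega> * real_cond_exp M (G n) (indicator (A n)) \<omega> = f \<omega> * q n \<omega>"
        using pce[of n] qp_t[of n] by eventually_elim simp
    qed
    finally have e1: "(\<integral>\<omega>. f \<omega> * indicator (A n) \<omega> \<partial>M) = (\<integral>\<omega>. f \<omega> * q n \<omega> \<partial>M)" .
    have "(\<integral>\<omega>. indicator (B (Suc n)) \<omega> * exp (S (Suc n) \<omega>) \<partial>M) = (\<integral>\<omega>. f \<omega> - f \<omega> * indicator (A n) \<omega> \<partial>M)"
    proof (rule Bochner_Integration.integral_cong[OF refl])
      fix \<omega> assume "\<omega> \<in> space M"
      have "B (Suc n) = B n - A n" unfolding B_def by (auto simp: less_Suc_eq)
      moreover have "S (Suc n) \<omega> = S n \<omega> + q n \<omega>" unfolding S_def by simp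
      ultimately show "indicator (B (Suc n)) \<omega> * exp (S (Suc n) \<omega>) = f \<omega> - f \<omega> * indicator (A n) \<omega>"
        unfolding f_def by (cases "\<omega> \<in> A n"; cases "\<omega> \<in> B n") (auto simp: indicator_def)
    qed
    also have "\<dots> = (\<integral>\<omega>. f \<omega> \<partial>M) - (\<integral>\<omega>. f \<omega> * q n \<omega> \<partial>M)"
      using e1 intf ifA by simp
    also have "\<dots> = (\<integral>\<omega>. f \<omega> - f \<omega> * q n \<omega> \<partial>M)" using intf ifq by simp
    also have "\<dots> \<le> (\<integral>\<omega>. indicator (B n) \<omega> * exp (S n \<omega>) \<partial>M)"
    proof (rule integral_mono)
      show "integrable M (\<lambda>\<omega>. f \<omega> - f \<omega> * q n \<omega>)" using intf ifq by simp
      show "integrable M (\<lambda>\<omega>. indicator (B n) \<omega> * exp (S n \<omega>))"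
        by (rule bint[of _ "exp n"]) (use BM measM[OF Sm] S_le in \<open>auto simp: indicator_def\<close>)
      fix \<omega>
      have "exp (q n \<omega>) * (1 - q n \<omega>) \<le> 1"
      proof -
        have "1 - q n \<omega> \<le> exp (- q n \<omega>)" using exp_ge_add_one_self[of "- q n \<omega>"] by simp
        then have "exp (q n \<omega>) * (1 - q n \<omega>) \<le> exp (q n \<omega>) * exp (- q n \<omega>)" by simp
        then show ?thesis by (simp add: exp_minus)
      qed
      then have "exp (S n \<omega>) * (exp (q n \<omega>) * (1 - q n \<omega>)) \<le> exp (S n \<omega>) * 1"
        by (intro mult_left_mono) auto
      then show "f \<omega> - f \<omega> * q n \<omega> \<le> indicator (B n) \<omega> * exp (S n \<omega>)"
        unfolding f_def by (auto simp: indicator_def exp_add algebra_simps)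
    qed
    also have "\<dots> \<le> 1" by (rule Suc.IH)
    finally show ?case .
  qed
  define N where "N = {\<omega>\<in>space M. (\<forall>t. \<omega> \<notin> A t) \<and> (\<forall>C::nat. \<exists>n. real C \<le> S n \<omega>)}"
  have SmM: "S n \<in> borel_measurable M" for n using measM[OF Sm] .
  have lev: "{\<omega>\<in>space M. real C \<le> S n \<omega>} \<in> sets M" for C n using SmM[of n] by measurable
  have NM: "N \<in> sets M"
  proof -
    have "N = (\<Inter>t. space M - A t) \<inter> (\<Inter>C::nat. \<Union>n. {\<omega>\<in>space M. real C \<le> S n \<omega>})"
      unfolding N_def by auto
    moreover have "(\<Inter>t. space M - A t) \<in> sets M" using AM by auto
    moreover have "(\<Inter>C::nat. \<Union>n. {\<omega>\<in>space M. real C \<le> S n \<omega>}) \<in> sets M" using lev by auto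
    ultimately show ?thesis by simp
  qed
  have markov: "prob (B n \<inter> {\<omega>\<in>space M. real C \<le> S n \<omega>}) * exp (real C) \<le> 1" for n C
  proof -
    have Wm: "B n \<inter> {\<omega>\<in>space M. real C \<le> S n \<omega>} \<in> sets M" using BM lev by auto
    have "prob (B n \<inter> {\<omega>\<in>space M. real C \<le> S n \<omega>}) * exp (real C)
        = (\<integral>\<omega>. indicator (B n \<inter> {\<omega>\<in>space M. real C \<le> S n \<omega>}) \<omega> * exp (real C) \<partial>M)"
      using Wm by (simp add: integral_indicator)
    also have "\<dots> \<le> (\<integral>\<omega>. indicator (B n) \<omega> * exp (S n \<omega>) \<partial>M)"
    proof (rule integral_mono)
      show "integrable M (\<lambda>\<omega>. indicator (B n \<inter> {\<omega>\<in>space M. real C \<le> S n \<omega>}) \<omega> * exp (real C))"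
        using Wm by (intro integrable_mult_left integrable_real_indicator) (auto simp: emeasure_eq_measure)
      show "integrable M (\<lambda>\<omega>. indicator (B n) \<omega> * exp (S n \<omega>))"
        by (rule bint[of _ "exp n"]) (use BM measM[OF Sm] S_le in \<open>auto simp: indicator_def\<close>)
    qed (auto simp: indicator_def)
    also have "\<dots> \<le> 1" by (rule key)
    finally show ?thesis .
  qed
  have probN: "prob N * (1 + real C) \<le> 1" for C :: nat
  proof -
    define W where "W n = N \<inter> {\<omega>\<in>space M. real C \<le> S n \<omega>}" for n
    have Wm: "range W \<subseteq> events" unfolding W_def using NM lev by auto
    have Winc: "incseq W" unfolding W_def incseq_def using S_mono by (auto intro: order_trans)
    have WU: "(\<Union>(range W)) = N" unfolding W_def N_def by auto
    have lim: "(\<lambda>n. prob (W n)) \<longlonglongrightarrow> prob N"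
      using finite_Lim_measure_incseq[OF Wm Winc] WU by simp
    have "prob (W n) * (1 + real C) \<le> 1" for n
    proof -
      have "W n \<subseteq> B n \<inter> {\<omega>\<in>space M. real C \<le> S n \<omega>}" unfolding W_def N_def B_def by auto
      then have "prob (W n) \<le> prob (B n \<inter> {\<omega>\<in>space M. real C \<le> S n \<omega>})"
        using BM SmM by (intro finite_measure_mono) auto
      then have "prob (W n) * exp (real C) \<le> 1" using markov[of n C] by (meson exp_ge_zero mult_right_mono order_trans)
      moreover have "prob (W n) * (1 + real C) \<le> prob (W n) * exp (real C)"
        by (intro mult_left_mono exp_ge_add_one_self[of "real C", simplified add.commute]) auto
      ultimately show ?thesis by linarith
    qed
    then show ?thesis
      by (intro LIMSEQ_le_const2[OF tendsto_mult_right[OF lim]]) auto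
  qed
  have "prob N = 0"
  proof (rule ccontr)
    assume "prob N \<noteq> 0"
    then have pos: "prob N > 0" using measure_nonneg[of M N] by linarith
    obtain C :: nat where "1 / prob N < real C" using reals_Archimedean2 by blast
    then have "1 < prob N * real C" using pos by (simp add: field_simps)
    with probN[of C] pos show False by (simp add: algebra_simps)
  qed
  then have "N \<in> null_sets M" using NM by (simp add: emeasure_eq_measure null_setsI)
  then have AEN: "AE \<omega> in M. \<omega> \<notin> N" by (rule AE_not_in)
  show ?thesis
    using AEN qp AE_space
  proof eventually_elim
    case (elim \<omega>)
    have nN: "\<omega> \<notin> N" and qq0: "\<forall>t. q t \<omega> = p t \<omega>" and sp: "\<omega> \<in> space M"
      using elim by blast+
    have qq: "(\<lambda>t. q t \<omega>) = (\<lambda>t. p t \<omega>)" using qq0 by (intro ext) blast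
    show ?case
    proof (rule impI, rule ccontr)
      assume ns: "\<not> summable (\<lambda>t. p t \<omega>)" and nA: "\<nexists>t. \<omega> \<in> A t"
      have "\<exists>n. real C \<le> S n \<omega>" for C :: nat
      proof (rule ccontr)
        assume "\<nexists>n. real C \<le> S n \<omega>"
        then have b: "S n \<omega> \<le> real C" for n by (meson nle_le)
        have "summable (\<lambda>t. q t \<omega>)"
        proof (rule summableI_nonneg_bounded[where x="real C"])
          show "0 \<le> q n \<omega>" for n by (rule q01)
          show "sum (\<lambda>t. q t \<omega>) {..<n} \<le> real C" for n using b[of n] unfolding S_def .
        qed
        with ns qq show False by simp
      qed
      then have "\<omega> \<in> N" using nA sp unfolding N_def by blast
      with nN show False by blast
    qed
  qed
qed

lemma hyperrect_props:
  assumes "hyperrect (R :: 'a::euclidean_space set)"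
  shows "interior R \<noteq> {}" "closure (interior R) = R" "compact R" "closed R" "bounded R"
proof -
  obtain lo hi where R: "R = cbox lo hi" and ne: "box lo hi \<noteq> {}" using assms unfolding hyperrect_def by blast
  show "interior R \<noteq> {}" using ne R by (simp add: interior_cbox)
  show "closure (interior R) = R" using ne R by (simp add: interior_cbox closure_box)
  show "compact R" "closed R" "bounded R" using R by (auto simp: compact_imp_closed compact_imp_bounded)
qed

lemma meets_closure:
  assumes "open U" "p \<in> U" "p \<in> closure V" shows "U \<inter> V \<noteq> {}"
  using open_Int_closure_eq_empty[OF assms(1), of V] assms by blast

lemma tree_small_leaf:
  fixes Reg :: "nat \<Rightarrow> 'a::euclidean_space set" and Lv Sel :: "nat \<Rightarrow> nat set"
  assumes fin: "\<And>t. finite (Lv t)"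
    and hr: "\<And>t k. k \<in> Lv t \<Longrightarrow> hyperrect (Reg k)"
    and cov: "\<And>t. (\<Union>k\<in>Lv t. Reg k) = X"
    and dis: "\<And>t k l. k \<in> Lv t \<Longrightarrow> l \<in> Lv t \<Longrightarrow> k \<noteq> l \<Longrightarrow> interior (Reg k) \<inter> interior (Reg l) = {}"
    and child: "\<And>t l. l \<in> Lv (Suc t) \<Longrightarrow> l \<in> Lv t \<or> (\<exists>k\<in>Lv t. k \<notin> Lv (Suc t) \<and> Reg l \<subseteq> Reg k)"
    and A2: "\<And>R :: nat \<Rightarrow> nat. (\<forall>n. \<exists>t. R n \<in> Lv t) \<and> (\<forall>n. Reg (R (Suc n)) \<subset> Reg (R n))
        \<longrightarrow> (\<lambda>n. diameter (Reg (R n))) \<longlonglongrightarrow> 0"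
    and A4s: "\<And>k t0. k \<in> Lv t0 \<and> (\<exists>\<^sub>F t in sequentially. \<exists>j\<in>Sel t. Reg j \<subseteq> Reg k)
        \<longrightarrow> (\<exists>\<^sub>F t in sequentially. \<exists>j\<in>Lv t. Reg j \<subseteq> Reg k \<and> j \<notin> Lv (Suc t))"
    and A4m: "\<And>t j l. j \<in> Lv t \<and> j \<notin> Lv (Suc t) \<and> l \<in> Lv (Suc t) \<and> Reg l \<subseteq> Reg j
        \<longrightarrow> diameter (Reg l) < diameter (Reg j)"
    and L: "\<And>k t0. k \<in> Lv t0 \<Longrightarrow> \<exists>t\<ge>t0. \<exists>j\<in>Sel t. Reg j \<subseteq> Reg k"
    and x: "x \<in> X" and eps: "\<epsilon> > 0"
  shows "\<exists>k t. k \<in> Lv t \<and> x \<in> Reg k \<and> diameter (Reg k) < \<epsilon>"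
proof -
  have leaf_eq: "j = k" if "j \<in> Lv t" "k \<in> Lv t" "Reg j \<subseteq> Reg k" for j k t
  proof (rule ccontr)
    assume "j \<noteq> k"
    then have "interior (Reg j) \<inter> interior (Reg k) = {}" using dis that by blast
    moreover have "interior (Reg j) \<subseteq> interior (Reg k)" using that(3) by (rule interior_mono)
    ultimately show False using hyperrect_props(1)[OF hr[OF that(1)]] by blast
  qed
  have step: "\<exists>t' k'. k' \<in> Lv t' \<and> x \<in> Reg k' \<and> Reg k' \<subset> Reg k"
    if kt: "k \<in> Lv t" and xk: "x \<in> Reg k" for k t
  proof -
    have "\<exists>s. k \<in> Lv s \<and> k \<notin> Lv (Suc s)"
    proof (rule ccontr)
      assume "\<not> ?thesis"
      then have stay: "k \<in> Lv s \<Longrightarrow> k \<in> Lv (Suc s)" for s by blast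
      have always: "k \<in> Lv s" if "t \<le> s" for s
        using that
      proof (induction s rule: dec_induct)
        case base then show ?case using kt .
      next
        case (step s) then show ?case using stay by blast
      qed
      have "\<exists>\<^sub>F t in sequentially. \<exists>j\<in>Sel t. Reg j \<subseteq> Reg k"
        unfolding frequently_sequentially
      proof
        fix N
        obtain t' where "t' \<ge> max N t" "\<exists>j\<in>Sel t'. Reg j \<subseteq> Reg k"
          using L[OF always[of "max N t"]] by auto
        then show "\<exists>n\<ge>N. \<exists>j\<in>Sel n. Reg j \<subseteq> Reg k" by auto
      qed
      then have "\<exists>\<^sub>F t in sequentially. \<exists>j\<in>Lv t. Reg j \<subseteq> Reg k \<and> j \<notin> Lv (Suc t)"
        using A4s kt by blast
      then obtain t'' j where "t'' \<ge> t" "j \<in> Lv t''" "Reg j \<subseteq> Reg k" "j \<notin> Lv (Suc t'')"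
        unfolding frequently_sequentially by blast
      moreover have "k \<in> Lv t''" using always \<open>t'' \<ge> t\<close> by blast
      ultimately show False using leaf_eq stay by blast
    qed
    then obtain s where ks: "k \<in> Lv s" and kns: "k \<notin> Lv (Suc s)" by blast
    define C where "C = {l \<in> Lv (Suc s). Reg l \<subseteq> Reg k}"
    have hk: "hyperrect (Reg k)" using hr[OF ks] .
    have sub: "interior (Reg k) \<subseteq> (\<Union>l\<in>C. Reg l)"
    proof
      fix p assume pint: "p \<in> interior (Reg k)"
      then have "p \<in> X" using cov[of s] ks interior_subset by blast
      then obtain l where l: "l \<in> Lv (Suc s)" "p \<in> Reg l" using cov[of "Suc s"] by blast
      have "Reg l \<subseteq> Reg k"
      proof -
        from child[OF l(1)] show ?thesis
        proof
          assume ls: "l \<in> Lv s"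
          show ?thesis
          proof (cases "l = k")
            case True then show ?thesis by simp
          next
            case False
            then have "interior (Reg k) \<inter> interior (Reg l) = {}" using dis ks ls by blast
            moreover have "p \<in> closure (interior (Reg l))" using hyperrect_props(2)[OF hr[OF ls]] l(2) by simp
            ultimately show ?thesis using meets_closure[OF open_interior pint] by blast
          qed
        next
          assume "\<exists>k'\<in>Lv s. k' \<notin> Lv (Suc s) \<and> Reg l \<subseteq> Reg k'"
          then obtain k' where k': "k' \<in> Lv s" "Reg l \<subseteq> Reg k'" by blast
          show ?thesis
          proof (cases "k' = k")
            case True then show ?thesis using k' by simp
          next
            case False
            then have "interior (Reg k) \<inter> interior (Reg k') = {}" using dis ks k' by blast
            moreover have "p \<in> closure (interior (Reg k'))" using hyperrect_props(2)[OF hr[OF k'(1)]] l(2) k'(2) by auto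
            ultimately show ?thesis using meets_closure[OF open_interior pint] by blast
          qed
        qed
      qed
      then show "p \<in> (\<Union>l\<in>C. Reg l)" using l unfolding C_def by blast
    qed
    have "closed (\<Union>l\<in>C. Reg l)"
      using fin[of "Suc s"] hr unfolding C_def by (intro closed_UN) (auto intro: hyperrect_props(4))
    then have "closure (interior (Reg k)) \<subseteq> (\<Union>l\<in>C. Reg l)" using sub by (rule closure_minimal[rotated])
    then have "x \<in> (\<Union>l\<in>C. Reg l)" using hyperrect_props(2)[OF hk] xk by blast
    then obtain l where l: "l \<in> Lv (Suc s)" "Reg l \<subseteq> Reg k" "x \<in> Reg l" unfolding C_def by blast
    have "diameter (Reg l) < diameter (Reg k)" using A4m[of k s l] ks kns l by blast
    then have "Reg l \<subset> Reg k" using l(2) by auto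
    then show ?thesis using l by blast
  qed
  obtain k0 t0 where k0: "k0 \<in> Lv t0" "x \<in> Reg k0" using cov[of 0] x by blast
  define P where "P = (\<lambda>(n::nat) (p::nat \<times> nat). snd p \<in> Lv (fst p) \<and> x \<in> Reg (snd p))"
  define Q where "Q = (\<lambda>(n::nat) (p::nat \<times> nat) (q::nat \<times> nat). Reg (snd q) \<subset> Reg (snd p))"
  have P0: "P 0 (t0, k0)" using k0 unfolding P_def by simp
  have PS: "\<exists>q. P (Suc n) q \<and> Q n p q" if Pnp: "P n p" for n p
  proof -
    obtain t' k' where "k' \<in> Lv t'" "x \<in> Reg k'" "Reg k' \<subset> Reg (snd p)" using step[of "snd p" "fst p"] Pnp unfolding P_def by auto
    then show ?thesis unfolding P_def Q_def by (intro exI[of _ "(t', k')"]) simp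
  qed
  have "\<exists>f. \<forall>n. P n (f n) \<and> Q n (f n) (f (Suc n))"
    using P0 PS by (intro dependent_nat_choice[of P]) blast+
  then have "\<exists>f. \<forall>n. (snd (f n) \<in> Lv (fst (f n)) \<and> x \<in> Reg (snd (f n)))
           \<and> Reg (snd (f (Suc n))) \<subset> Reg (snd (f n))" unfolding P_def Q_def by simp
  then obtain f where f: "\<And>n. snd (f n) \<in> Lv (fst (f n))" "\<And>n. x \<in> Reg (snd (f n))"
      "\<And>n. Reg (snd (f (Suc n))) \<subset> Reg (snd (f n))" by blast
  have "(\<lambda>n. diameter (Reg (snd (f n)))) \<longlonglongrightarrow> 0"
    using A2[of "\<lambda>n. snd (f n)"] f by blast
  then have "\<forall>\<^sub>F n in sequentially. diameter (Reg (snd (f n))) < \<epsilon>"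
    using eps by (rule order_tendstoD(2))
  then obtain n where "diameter (Reg (snd (f n))) < \<epsilon>"
    unfolding eventually_sequentially by blast
  then show ?thesis using f by blast
qed

definition DS :: "real^'m \<Rightarrow> (real^'m) set \<Rightarrow> (real^'m) set" where
  "DS r Y = (\<Union>y\<in>Y. {z. (\<forall>i. y $ i \<le> z $ i) \<and> (\<forall>i. z $ i \<le> r $ i)})"

lemma hv_DS: "hypervolume r Y = measure lebesgue (DS r Y)"
  unfolding hypervolume_def DS_def ..

lemma cont_comp: "continuous_on S (f :: 'a::topological_space \<Rightarrow> real^'m) \<Longrightarrow> continuous_on S (\<lambda>x. f x $ i)"
  by (intro continuous_intros)

lemma DS_closed:
  fixes r :: "real^'m" and Y :: "(real^'m) set"
  assumes "compact Y" shows "closed (DS r Y)"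
proof -
  define Orth where "Orth = {v :: real^'m. \<forall>i. 0 \<le> v $ i}"
  have cO: "closed Orth" unfolding Orth_def
    by (intro closed_Collect_all closed_Collect_le continuous_intros)
  have cR: "closed {z :: real^'m. \<forall>i. z $ i \<le> r $ i}"
    by (intro closed_Collect_all closed_Collect_le continuous_intros)
  have "DS r Y = (\<Union>v\<in>Orth. \<Union>y\<in>Y. {v + y}) \<inter> {z. \<forall>i. z $ i \<le> r $ i}"
  proof (intro equalityI subsetI)
    fix z assume "z \<in> DS r Y"
    then obtain y where y: "y \<in> Y" "\<forall>i. y $ i \<le> z $ i" "\<forall>i. z $ i \<le> r $ i" unfolding DS_def by blast
    then have "z - y \<in> Orth" unfolding Orth_def by auto
    show "z \<in> (\<Union>v\<in>Orth. \<Union>y\<in>Y. {v + y}) \<inter> {z. \<forall>i. z $ i \<le> r $ i}"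
      by (rule IntI, rule UN_I[OF \<open>z - y \<in> Orth\<close>], rule UN_I[OF y(1)]) (use y(3) in auto)
  next
    fix z assume "z \<in> (\<Union>v\<in>Orth. \<Union>y\<in>Y. {v + y}) \<inter> {z. \<forall>i. z $ i \<le> r $ i}"
    then show "z \<in> DS r Y" unfolding DS_def Orth_def by force
  qed
  then show ?thesis using closed_compact_sums[OF cO assms] cR by (simp add: closed_Int)
qed

lemma DS_bounded:
  assumes "bounded Y" shows "bounded (DS r Y)"
proof -
  obtain B where B: "\<And>y. y \<in> Y \<Longrightarrow> norm y \<le> B" using assms bounded_iff by blast
  have "DS r Y \<subseteq> cbox (\<chi> i. - B) r"
  proof
    fix z assume "z \<in> DS r Y"
    then obtain y where y: "y \<in> Y" "\<forall>i. y $ i \<le> z $ i" "\<forall>i. z $ i \<le> r $ i" unfolding DS_def by blast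
    have "- B \<le> y $ i" for i using B[OF y(1)] component_le_norm_cart[of y i] by auto
    then show "z \<in> cbox (\<chi> i. - B) r" using y by (auto simp: mem_box_cart intro: order_trans)
  qed
  then show ?thesis using bounded_cbox bounded_subset by blast
qed

lemma DS_mono: "Y \<subseteq> Y' \<Longrightarrow> DS r Y \<subseteq> DS r Y'"
  unfolding DS_def by blast

lemma pareto_exists:
  fixes F :: "'a::euclidean_space \<Rightarrow> real^'m"
  assumes X: "compact X" and F: "continuous_on X F" and x: "x \<in> X"
  shows "\<exists>x'\<in>pareto_set F X. \<forall>i. F x' $ i \<le> F x $ i"
proof -
  define K where "K = X \<inter> F -` {y. \<forall>i. y $ i \<le> F x $ i}"
  have cT: "closed {y::real^'m. \<forall>i. y $ i \<le> F x $ i}"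
    by (intro closed_Collect_all closed_Collect_le continuous_intros)
  have cK0: "closed K" unfolding K_def by (rule continuous_closed_preimage[OF F compact_imp_closed[OF X] cT])
  have KX: "K \<subseteq> X" unfolding K_def by blast
  have "X \<inter> K = K" using KX by blast
  then have cK: "compact K" using compact_Int_closed[OF X cK0] by simp
  have xK: "x \<in> K" unfolding K_def using x by simp
  then have neK: "K \<noteq> {}" by blast
  have FK: "continuous_on K F" by (rule continuous_on_subset[OF F KX])
  have "continuous_on K (\<lambda>x. F x $ i)" for i by (rule cont_comp[OF FK])
  then have cg: "continuous_on K (\<lambda>x. \<Sum>i\<in>UNIV. F x $ i)" by (rule continuous_on_sum)
  obtain xs where xs: "xs \<in> K" and mn: "\<forall>y\<in>K. (\<Sum>i\<in>UNIV. F xs $ i) \<le> (\<Sum>i\<in>UNIV. F y $ i)"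
    using continuous_attains_inf[OF cK neK cg] by blast
  have xsle: "F xs $ i \<le> F x $ i" for i using xs unfolding K_def by simp
  have "xs \<in> pareto_set F X"
    unfolding pareto_set_def
  proof (safe)
    show "xs \<in> X" using xs KX by blast
    fix x'' assume x'': "x'' \<in> X" "pareto_dom (F x'') (F xs)"
    then have le: "\<forall>i. F x'' $ i \<le> F xs $ i" and lt: "\<exists>j. F x'' $ j < F xs $ j" unfolding pareto_dom_def by auto
    have "F x'' $ i \<le> F x $ i" for i using le xsle[of i] by (meson order_trans)
    then have "x'' \<in> K" using x''(1) unfolding K_def by simp
    then have "(\<Sum>i\<in>UNIV. F xs $ i) \<le> (\<Sum>i\<in>UNIV. F x'' $ i)" using mn by blast
    moreover have "(\<Sum>i\<in>UNIV. F x'' $ i) < (\<Sum>i\<in>UNIV. F xs $ i)"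
      using le lt by (intro sum_strict_mono_ex1) auto
    ultimately show False by linarith
  qed
  then show ?thesis using xsle by blast
qed

lemma DS_pareto:
  fixes F :: "'a::euclidean_space \<Rightarrow> real^'m"
  assumes X: "compact X" and F: "continuous_on X F"
  shows "DS r (F ` pareto_set F X) = DS r (F ` X)"
proof
  show "DS r (F ` pareto_set F X) \<subseteq> DS r (F ` X)" by (intro DS_mono image_mono) (auto simp: pareto_set_def)
  show "DS r (F ` X) \<subseteq> DS r (F ` pareto_set F X)"
  proof
    fix z assume "z \<in> DS r (F ` X)"
    then obtain x where x: "x \<in> X" "\<forall>i. F x $ i \<le> z $ i" "\<forall>i. z $ i \<le> r $ i" unfolding DS_def by blast
    obtain x' where x': "x' \<in> pareto_set F X" "\<forall>i. F x' $ i \<le> F x $ i" using pareto_exists[OF X F x(1)] by blast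
    have "F x' $ i \<le> z $ i" for i using x'(2) x(2) by (meson order_trans)
    then show "z \<in> DS r (F ` pareto_set F X)" using x'(1) x(3) unfolding DS_def by blast
  qed
qed

lemma boundary_null:
  fixes Y :: "(real^'m) set"
  assumes bY: "bounded Y" and cY: "compact Y"
  defines "V \<equiv> {z. \<exists>y\<in>Y. \<forall>i. y $ i < z $ i}"
  shows "DS r Y - V \<in> lmeasurable" "measure lebesgue (DS r Y - V) = 0"
proof -
  define E where "E = DS r Y - V"
  have oV: "open V"
  proof -
    have "V = (\<Union>y\<in>Y. {z. \<forall>i. y $ i < z $ i})" unfolding V_def by blast
    moreover have "open {z :: real^'m. \<forall>i. y $ i < z $ i}" for y
    proof -
      have "{z :: real^'m. \<forall>i. y $ i < z $ i} = (\<Inter>i\<in>UNIV. {z. y $ i < z $ i})" by blast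
      moreover have "open {z :: real^'m. y $ i < z $ i}" for i
        by (intro open_Collect_less continuous_intros)
      ultimately show ?thesis by (auto intro: open_INT)
    qed
    ultimately show ?thesis by auto
  qed
  have Eleb: "E \<in> sets lebesgue" unfolding E_def
    using DS_closed[OF cY] oV by (intro sets.Diff) (auto intro: borel_closed borel_open)
  have bE: "bounded E" unfolding E_def using DS_bounded[OF bY] bounded_subset by blast
  show Em: "DS r Y - V \<in> lmeasurable" using bounded_set_imp_lmeasurable[OF bE Eleb] E_def by simp
  define one :: "real^'m" where "one = (\<chi> i. 1)"
  define T where "T s = (+) (s *\<^sub>R one) ` E" for s :: real
  obtain B where B: "\<And>z. z \<in> E \<Longrightarrow> norm z \<le> B" using bE bounded_iff by blast
  define K where "K = cball (0 :: real^'m) (B + norm one)"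
  have TK: "T s \<subseteq> K" if "0 \<le> s" "s \<le> 1" for s
  proof
    fix w assume "w \<in> T s"
    then obtain e where e: "e \<in> E" "w = s *\<^sub>R one + e" unfolding T_def by blast
    have "norm w \<le> norm (s *\<^sub>R one) + norm e" using e norm_triangle_ineq by (metis add.commute)
    also have "\<dots> \<le> norm one + B"
    proof -
      have "s * norm one \<le> norm one" using that by (simp add: mult_left_le_one_le)
      then show ?thesis using that B[OF e(1)] by simp
    qed
    finally show "w \<in> K" unfolding K_def by (simp add: add.commute)
  qed
  have Tm: "T s \<in> lmeasurable" for s unfolding T_def using Em E_def by (intro measurable_translation) simp
  have Tmeas: "measure lebesgue (T s) = measure lebesgue E" for s unfolding T_def by (rule measure_translation)
  have Tdisj: "T a \<inter> T b = {}" if "a < b" for a b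
  proof (rule ccontr)
    assume "T a \<inter> T b \<noteq> {}"
    then obtain e1 e2 where e: "e1 \<in> E" "e2 \<in> E" "a *\<^sub>R one + e1 = b *\<^sub>R one + e2" unfolding T_def by auto
    then have e1: "e1 = e2 + (b - a) *\<^sub>R one" by (simp add: algebra_simps)
    from e(2) obtain y where y: "y \<in> Y" "\<forall>i. y $ i \<le> e2 $ i" unfolding E_def DS_def by blast
    have "\<forall>i. y $ i < e1 $ i" using y that e1 by (auto simp: one_def intro: order.strict_trans1)
    then have "e1 \<in> V" using y unfolding V_def by blast
    then show False using e(1) unfolding E_def by blast
  qed
  have Kfin: "K \<in> lmeasurable" unfolding K_def by simp
  have bound: "real N * measure lebesgue E \<le> measure lebesgue K" if Npos: "N > 0" for N :: nat
  proof -
    have "real N * measure lebesgue E = (\<Sum>k<N. measure lebesgue (T (real k / real N)))"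
      by (simp add: Tmeas)
    also have "\<dots> = measure lebesgue (\<Union>k<N. T (real k / real N))"
    proof (rule measure_finite_Union[symmetric])
      show "disjoint_family_on (\<lambda>k. T (real k / real N)) {..<N}"
        unfolding disjoint_family_on_def
      proof (intro ballI impI)
        fix k l assume "k \<in> {..<N}" "l \<in> {..<N}" "k \<noteq> l"
        then have "real k / real N < real l / real N \<or> real l / real N < real k / real N"
        proof -
          have "real k < real l \<or> real l < real k" using \<open>k \<noteq> l\<close> by linarith
          moreover have "real N > 0" using Npos by simp
          ultimately show ?thesis by (meson divide_strict_right_mono)
        qed
        then show "T (real k / real N) \<inter> T (real l / real N) = {}" using Tdisj by blast
      qed
    qed (use fmeasurableD2[OF Tm] in \<open>auto intro: fmeasurableD[OF Tm]\<close>)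
    also have "\<dots> \<le> measure lebesgue K"
    proof (rule measure_mono_fmeasurable[OF _ _ Kfin])
      show "(\<Union>k<N. T (real k / real N)) \<subseteq> K"
      proof (intro UN_least)
        fix k assume "k \<in> {..<N}"
        then have "real k / real N \<le> 1" by (simp add: divide_le_eq_1)
        then show "T (real k / real N) \<subseteq> K" using TK by simp
      qed
      show "(\<Union>k<N. T (real k / real N)) \<in> sets lebesgue" using Tm by (auto simp: fmeasurable_def)
    qed
    finally show ?thesis .
  qed
  show "measure lebesgue (DS r Y - V) = 0"
  proof (rule ccontr)
    assume "measure lebesgue (DS r Y - V) \<noteq> 0"
    then have pos: "measure lebesgue E > 0" using measure_nonneg[of lebesgue E] unfolding E_def by linarith
    obtain N :: nat where N: "measure lebesgue K / measure lebesgue E < real N" using reals_Archimedean2 by blast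
    have "0 \<le> measure lebesgue K / measure lebesgue E" using pos measure_nonneg[of lebesgue K] by simp
    then have "0 < real N" using N by linarith
    then have "N > 0" by simp
    have "measure lebesgue K < real N * measure lebesgue E" using N pos by (simp add: field_simps)
    with bound[OF \<open>N > 0\<close>] show False by simp
  qed
qed

lemma hv_conv:
  fixes F :: "'a::euclidean_space \<Rightarrow> real^'m" and r :: "real^'m"
  assumes X: "compact X" and F: "continuous_on X F"
    and inc: "\<And>t. Sq t \<subseteq> Sq (Suc t)" and fin: "\<And>t. finite (Sq t)" and sub: "\<And>t. Sq t \<subseteq> X"
    and dense: "\<And>x e. x \<in> X \<Longrightarrow> e > 0 \<Longrightarrow> \<exists>t. \<exists>x'\<in>Sq t. dist x' x < e"
  shows "(\<lambda>t. measure lebesgue (DS r (F ` Sq t))) \<longlonglongrightarrow> measure lebesgue (DS r (F ` X))"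
proof -
  define D where "D = DS r (F ` X)"
  define Dt where "Dt t = DS r (F ` Sq t)" for t
  define V where "V = {z. \<exists>y\<in>F ` X. \<forall>i. y $ i < z $ i}"
  have cFX: "compact (F ` X)" using compact_continuous_image[OF F X] .
  have bFX: "bounded (F ` X)" using compact_imp_bounded[OF cFX] .
  have Dleb: "D \<in> sets lebesgue" unfolding D_def using DS_closed[OF cFX]
    by (metis borel_closed sets_completionI_sets sets_lborel)
  have Dfm: "D \<in> lmeasurable" unfolding D_def using DS_bounded[OF bFX] Dleb D_def
    by (intro bounded_set_imp_lmeasurable) auto
  have Dtleb: "Dt t \<in> sets lebesgue" for t unfolding Dt_def
    using DS_closed[OF finite_imp_compact[OF finite_imageI[OF fin[of t]]]]
    by (metis borel_closed sets_completionI_sets sets_lborel)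
  have DtD: "Dt t \<subseteq> D" for t unfolding Dt_def D_def using sub by (intro DS_mono image_mono)
  have incD: "incseq Dt" unfolding incseq_def Dt_def
  proof (intro allI impI DS_mono image_mono)
    fix m n :: nat assume "m \<le> n" then show "Sq m \<subseteq> Sq n" using lift_Suc_mono_le[of Sq, OF inc] by blast
  qed
  define U where "U = (\<Union>t. Dt t)"
  have Uleb: "U \<in> sets lebesgue" unfolding U_def using Dtleb by auto
  have UD: "U \<subseteq> D" unfolding U_def using DtD by blast
  have lim: "(\<lambda>t. measure lebesgue (Dt t)) \<longlonglongrightarrow> measure lebesgue U"
    unfolding U_def
  proof (rule Lim_measure_incseq)
    show "range Dt \<subseteq> sets lebesgue" using Dtleb by auto
    show "incseq Dt" by (rule incD)
    have "emeasure lebesgue (\<Union>(range Dt)) \<le> emeasure lebesgue D"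
      using UD Dleb unfolding U_def by (intro emeasure_mono) auto
    then show "emeasure lebesgue (\<Union>(range Dt)) \<noteq> \<infinity>" using Dfm
      by (auto simp: fmeasurable_def top_unique)
  qed
  have DUE: "D \<subseteq> U \<union> (D - V)"
  proof
    fix z assume zD: "z \<in> D"
    show "z \<in> U \<union> (D - V)"
    proof (cases "z \<in> V")
      case False then show ?thesis using zD by blast
    next
      case True
      then obtain x where x: "x \<in> X" "\<forall>i. F x $ i < z $ i" unfolding V_def by blast
      from zD obtain y where "y \<in> F ` X" "\<forall>i. z $ i \<le> r $ i" unfolding D_def DS_def by blast
      then have zr: "\<forall>i. z $ i \<le> r $ i" by blast
      define \<delta> where "\<delta> = Min (range (\<lambda>i. z $ i - F x $ i))"
      have dpos: "\<delta> > 0" unfolding \<delta>_def using x(2) by (subst Min_gr_iff) auto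
      have dle: "\<delta> \<le> z $ i - F x $ i" for i unfolding \<delta>_def by (rule Min_le) auto
      obtain d where d: "d > 0" "\<And>x'. x' \<in> X \<Longrightarrow> dist x' x < d \<Longrightarrow> dist (F x') (F x) < \<delta>"
        using F x(1) dpos unfolding continuous_on_iff by blast
      obtain t x' where x': "x' \<in> Sq t" "dist x' x < d" using dense[OF x(1) d(1)] by blast
      have "x' \<in> X" using x' sub by blast
      then have dd: "dist (F x') (F x) < \<delta>" using d x' by blast
      have "F x' $ i \<le> z $ i" for i
      proof -
        have "dist (F x' $ i) (F x $ i) < \<delta>" using dist_vec_nth_le[where x="F x'" and y="F x" and i=i] dd by linarith
        then have "F x' $ i < F x $ i + \<delta>" by (simp add: dist_real_def abs_less_iff)
        then show ?thesis using dle[of i] by linarith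
      qed
      then have "z \<in> Dt t" unfolding Dt_def DS_def using x'(1) zr by blast
      then show ?thesis unfolding U_def by blast
    qed
  qed
  have null: "measure lebesgue (D - V) = 0" "D - V \<in> lmeasurable"
    using boundary_null[OF bFX cFX, of r] unfolding D_def V_def by auto
  have "U \<union> (D - V) = D" using DUE UD by blast
  then have "measure lebesgue D \<le> measure lebesgue (U \<union> (D - V))" by simp
  also have "\<dots> \<le> measure lebesgue U + measure lebesgue (D - V)"
    using Uleb null(2) by (intro measure_Un_le) (auto simp: fmeasurable_def)
  finally have "measure lebesgue D \<le> measure lebesgue U" using null(1) by simp
  moreover have "measure lebesgue U \<le> measure lebesgue D"
    using UD Uleb Dfm by (rule measure_mono_fmeasurable)
  ultimately have "measure lebesgue U = measure lebesgue D" by simp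
  then show ?thesis using lim unfolding D_def Dt_def by simp
qed

theorem corollary1:
  fixes a b :: "'a::euclidean_space"
    and F :: "'a \<Rightarrow> real^'m"
    and r :: "real^'m"
    and M :: "'w measure"
    and Fs H :: "nat \<Rightarrow> 'w measure"
    and Reg :: "nat \<Rightarrow> 'w \<Rightarrow> 'a set"
    and Lv Sel :: "nat \<Rightarrow> 'w \<Rightarrow> nat set"
    and \<pi> :: "nat \<Rightarrow> nat \<Rightarrow> 'w \<Rightarrow> real"
    and nb :: "nat \<Rightarrow> nat \<Rightarrow> 'w \<Rightarrow> nat"
    and pt :: "nat \<Rightarrow> nat \<Rightarrow> nat \<Rightarrow> 'w \<Rightarrow> 'a"
    and S :: "nat \<Rightarrow> 'w \<Rightarrow> 'a set"
    and \<eta> :: real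
  assumes X_nondeg: "box a b \<noteq> {}"
    and ref_point: "\<forall>x\<in>cbox a b. pareto_dom (F x) r"
    and prob: "prob_space M"
    and filtration: "\<forall>t. subalgebra M (Fs t) \<and> subalgebra M (H t)
        \<and> sets (Fs t) \<subseteq> sets (H t) \<and> sets (H t) \<subseteq> sets (Fs (Suc t))"
    and partition: "\<forall>\<omega>\<in>space M. \<forall>t.
        finite (Lv t \<omega>)
        \<and> (\<forall>k\<in>Lv t \<omega>. hyperrect (Reg k \<omega>))
        \<and> (\<Union>k\<in>Lv t \<omega>. Reg k \<omega>) = cbox a b
        \<and> (\<forall>k\<in>Lv t \<omega>. \<forall>l\<in>Lv t \<omega>. k \<noteq> l \<longrightarrow> interior (Reg k \<omega>) \<inter> interior (Reg l \<omega>) = {})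
        \<and> (\<forall>l\<in>Lv (Suc t) \<omega>. l \<in> Lv t \<omega>
             \<or> (\<exists>k\<in>Lv t \<omega>. k \<notin> Lv (Suc t) \<omega> \<and> Reg l \<omega> \<subseteq> Reg k \<omega>))"
    and sampling: "\<forall>\<omega>\<in>space M. \<forall>t.
        Sel t \<omega> \<subseteq> Lv t \<omega>
        \<and> (\<forall>j\<in>Sel t \<omega>. 1 \<le> nb t j \<omega> \<and> (\<forall>i<nb t j \<omega>. pt t j i \<omega> \<in> Reg j \<omega>))"
    and samples: "\<forall>\<omega>\<in>space M. finite (S 0 \<omega>) \<and> S 0 \<omega> \<subseteq> cbox a b
        \<and> (\<forall>t. S (Suc t) \<omega> = S t \<omega> \<union> {pt t j i \<omega> | j i. j \<in> Sel t \<omega> \<and> i < nb t j \<omega>})"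
    and measurability: "\<forall>t k.
        {\<omega>\<in>space M. k \<in> Lv t \<omega>} \<in> sets (Fs t)
        \<and> {\<omega>\<in>space M. k \<in> Sel t \<omega>} \<in> sets (H t)
        \<and> {\<omega>\<in>space M. \<exists>j\<in>Sel t \<omega>. Reg j \<omega> \<subseteq> Reg k \<omega>} \<in> sets (H t)
        \<and> (\<forall>i. {\<omega>\<in>space M. i < nb t k \<omega>} \<in> sets (H t)
               \<and> pt t k i \<in> borel_measurable (Fs (Suc t)))"
    and selection_prob: "\<forall>k t. \<pi> k t \<in> borel_measurable (Fs t)
        \<and> (AE \<omega> in M. \<pi> k t \<omega> = real_cond_exp M (Fs t)
              (indicator {\<omega>\<in>space M. \<exists>j\<in>Sel t \<omega>. Reg j \<omega> \<subseteq> Reg k \<omega>}) \<omega>)"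
    and A1: "\<forall>i. \<exists>C. C-lipschitz_on (cbox a b) (\<lambda>x. F x $ i)"
    and A2: "AE \<omega> in M. \<forall>R :: nat \<Rightarrow> nat.
        (\<forall>n. \<exists>t. R n \<in> Lv t \<omega>) \<and> (\<forall>n. Reg (R (Suc n)) \<omega> \<subset> Reg (R n) \<omega>)
        \<longrightarrow> (\<lambda>n. diameter (Reg (R n) \<omega>)) \<longlonglongrightarrow> 0"
    and A3: "\<forall>k t0. AE \<omega> in M. k \<in> Lv t0 \<omega> \<longrightarrow> \<not> summable (\<lambda>t. \<pi> k (t0 + t) \<omega>)"
    and A4_split: "AE \<omega> in M. \<forall>k t0. k \<in> Lv t0 \<omega>
        \<and> (\<exists>\<^sub>F t in sequentially. \<exists>j\<in>Sel t \<omega>. Reg j \<omega> \<subseteq> Reg k \<omega>)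
        \<longrightarrow> (\<exists>\<^sub>F t in sequentially. \<exists>j\<in>Lv t \<omega>. Reg j \<omega> \<subseteq> Reg k \<omega> \<and> j \<notin> Lv (Suc t) \<omega>)"
    and A4_smaller: "AE \<omega> in M. \<forall>t j l. j \<in> Lv t \<omega> \<and> j \<notin> Lv (Suc t) \<omega>
        \<and> l \<in> Lv (Suc t) \<omega> \<and> Reg l \<omega> \<subseteq> Reg j \<omega>
        \<longrightarrow> diameter (Reg l \<omega>) < diameter (Reg j \<omega>)"
    and A5_pos: "\<eta> > 0"
    and A5: "\<forall>t j i c \<rho>. \<rho> > 0 \<longrightarrow> (AE \<omega> in M.
        j \<in> Sel t \<omega> \<and> i < nb t j \<omega> \<and> ball c \<rho> \<subseteq> Reg j \<omega> \<longrightarrow>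
        real_cond_exp M (H t) (indicator {\<omega>\<in>space M. pt t j i \<omega> \<in> ball c \<rho>}) \<omega>
          \<ge> \<eta> * measure lebesgue (ball c \<rho>) / measure lebesgue (Reg j \<omega>))"
  shows "AE \<omega> in M. (\<lambda>t. hypervolume r (F ` S t \<omega>))
            \<longlonglongrightarrow> hypervolume r (F ` pareto_set F (cbox a b))"
proof -
  interpret prob_space M by (rule prob)
  define X where "X = cbox a b"
  have cX: "compact X" unfolding X_def by simp
  have Fc: "continuous_on X F"
  proof -
    have "continuous_on X (\<lambda>x. F x $ i)" for i
      using A1 lipschitz_on_continuous_on unfolding X_def by blast
    then have "continuous_on X (\<lambda>x. \<chi> i. F x $ i)" by (rule continuous_on_vec_lambda)
    then show ?thesis by simp
  qed
  have target: "hypervolume r (F ` pareto_set F (cbox a b)) = measure lebesgue (DS r (F ` X))"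
    unfolding hv_DS X_def[symmetric] using DS_pareto[OF cX Fc] by simp
  have subFs: "subalgebra M (Fs t)" for t using filtration by blast
  have FsH: "sets (Fs t) \<subseteq> sets (H t)" "sets (H t) \<subseteq> sets (Fs (Suc t))" for t using filtration by blast+
  have Lk: "AE \<omega> in M. k \<in> Lv t0 \<omega> \<longrightarrow> (\<exists>t\<ge>t0. \<exists>j\<in>Sel t \<omega>. Reg j \<omega> \<subseteq> Reg k \<omega>)" for k t0
  proof -
    define A where "A t = {\<omega>\<in>space M. \<exists>j\<in>Sel (t0+t) \<omega>. Reg j \<omega> \<subseteq> Reg k \<omega>}" for t
    have lv: "AE \<omega> in M. \<not> summable (\<lambda>t. \<pi> k (t0+t) \<omega>) \<longrightarrow> (\<exists>t. \<omega> \<in> A t)"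
    proof (rule levy0[OF prob, of "\<lambda>t. Fs (t0+t)" A "\<lambda>t. \<pi> k (t0+t)"])
      show "subalgebra M (Fs (t0 + t))" for t by (rule subFs)
      show "sets (Fs (t0 + t)) \<subseteq> sets (Fs (t0 + Suc t))" for t using FsH[of "t0+t"] by auto
      show "A t \<in> sets (Fs (t0 + Suc t))" for t
        using measurability FsH(2)[of "t0+t"] unfolding A_def by auto
      show "\<pi> k (t0 + t) \<in> borel_measurable (Fs (t0 + t))" for t using selection_prob by blast
      show "AE \<omega> in M. \<pi> k (t0 + t) \<omega> = real_cond_exp M (Fs (t0 + t)) (indicator (A t)) \<omega>" for t
        using selection_prob unfolding A_def by blast
    qed
    show ?thesis using lv spec[OF spec[OF A3, of k], of t0]
    proof (eventually_elim)
      case (elim \<omega>)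
      then show ?case unfolding A_def by (auto intro: le_add1)
    qed
  qed
  have L: "AE \<omega> in M. \<forall>k t0. k \<in> Lv t0 \<omega> \<longrightarrow> (\<exists>t\<ge>t0. \<exists>j\<in>Sel t \<omega>. Reg j \<omega> \<subseteq> Reg k \<omega>)"
    using Lk by (simp add: AE_all_countable)
  show ?thesis
    using L A2 A4_split A4_smaller AE_space
  proof (eventually_elim)
    case (elim \<omega>)
    note L\<omega> = elim(1) and A2\<omega> = elim(2) and A4s\<omega> = elim(3) and A4m\<omega> = elim(4)
    have \<omega>: "\<omega> \<in> space M" using elim(5) .
    have fin: "\<And>t. finite (Lv t \<omega>)" using partition \<omega> by blast
    have hr: "\<And>t k. k \<in> Lv t \<omega> \<Longrightarrow> hyperrect (Reg k \<omega>)" using partition \<omega> by blast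
    have cov: "\<And>t. (\<Union>k\<in>Lv t \<omega>. Reg k \<omega>) = X" using partition \<omega> unfolding X_def by blast
    have dis: "\<And>t k l. k \<in> Lv t \<omega> \<Longrightarrow> l \<in> Lv t \<omega> \<Longrightarrow> k \<noteq> l \<Longrightarrow> interior (Reg k \<omega>) \<inter> interior (Reg l \<omega>) = {}"
      using partition \<omega> by blast
    have child: "\<And>t l. l \<in> Lv (Suc t) \<omega> \<Longrightarrow> l \<in> Lv t \<omega> \<or> (\<exists>k\<in>Lv t \<omega>. k \<notin> Lv (Suc t) \<omega> \<and> Reg l \<omega> \<subseteq> Reg k \<omega>)"
      using partition \<omega> by blast
    have selLv: "\<And>t. Sel t \<omega> \<subseteq> Lv t \<omega>" using sampling \<omega> by blast
    have nb1: "\<And>t j. j \<in> Sel t \<omega> \<Longrightarrow> 1 \<le> nb t j \<omega>" using sampling \<omega> by blast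
    have ptR: "\<And>t j i. j \<in> Sel t \<omega> \<Longrightarrow> i < nb t j \<omega> \<Longrightarrow> pt t j i \<omega> \<in> Reg j \<omega>" using sampling \<omega> by blast
    have S0: "finite (S 0 \<omega>)" "S 0 \<omega> \<subseteq> X" using samples \<omega> unfolding X_def by blast+
    have SS: "\<And>t. S (Suc t) \<omega> = S t \<omega> \<union> {pt t j i \<omega> | j i. j \<in> Sel t \<omega> \<and> i < nb t j \<omega>}"
      using samples \<omega> by blast
    have Lw: "\<And>k t0. k \<in> Lv t0 \<omega> \<Longrightarrow> \<exists>t\<ge>t0. \<exists>j\<in>Sel t \<omega>. Reg j \<omega> \<subseteq> Reg k \<omega>" using L\<omega> by blast
    have RegX: "Reg j \<omega> \<subseteq> X" if "j \<in> Lv t \<omega>" for j t using cov[of t] that by blast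
    have newfin: "finite {pt t j i \<omega> | j i. j \<in> Sel t \<omega> \<and> i < nb t j \<omega>}" for t
    proof -
      have "{pt t j i \<omega> | j i. j \<in> Sel t \<omega> \<and> i < nb t j \<omega>} = (\<lambda>(j, i). pt t j i \<omega>) ` (SIGMA j:Sel t \<omega>. {..<nb t j \<omega>})"
        by auto
      moreover have "finite (Sel t \<omega>)" using fin[of t] selLv[of t] finite_subset by blast
      ultimately show ?thesis by auto
    qed
    have Sfin: "finite (S t \<omega>)" for t
      by (induction t) (use S0 SS newfin in auto)
    have Ssub: "S t \<omega> \<subseteq> X" for t
    proof (induction t)
      case 0 then show ?case using S0 by simp
    next
      case (Suc t)
      have "{pt t j i \<omega> | j i. j \<in> Sel t \<omega> \<and> i < nb t j \<omega>} \<subseteq> X"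
        using ptR RegX selLv by blast
      then show ?case using Suc SS by auto
    qed
    have Sinc: "S t \<omega> \<subseteq> S (Suc t) \<omega>" for t using SS by auto
    have dense: "\<exists>t. \<exists>x'\<in>S t \<omega>. dist x' x < e" if x: "x \<in> X" and e: "e > 0" for x e
    proof -
      have "\<exists>k t. k \<in> Lv t \<omega> \<and> x \<in> Reg k \<omega> \<and> diameter (Reg k \<omega>) < e"
        apply (rule tree_small_leaf[where Reg="\<lambda>k. Reg k \<omega>" and Lv="\<lambda>t. Lv t \<omega>" and Sel="\<lambda>t. Sel t \<omega>" and X=X])
                  apply (rule fin)
                 apply (erule hr)
                apply (rule cov)
               apply (erule (2) dis)
              apply (erule child)
             apply (rule spec[OF A2\<omega>])
            apply (rule spec[OF spec[OF A4s\<omega>]])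
           apply (rule spec[OF spec[OF spec[OF A4m\<omega>]]])
          apply (erule Lw)
         apply (rule x)
        apply (rule e)
        done
      then obtain k t where k: "k \<in> Lv t \<omega>" "x \<in> Reg k \<omega>" "diameter (Reg k \<omega>) < e"
        by blast
      obtain t' j where j: "t' \<ge> t" "j \<in> Sel t' \<omega>" "Reg j \<omega> \<subseteq> Reg k \<omega>" using Lw[OF k(1)] by blast
      have p: "pt t' j 0 \<omega> \<in> Reg k \<omega>" using ptR[OF j(2)] nb1[OF j(2)] j(3) by auto
      have "pt t' j 0 \<omega> \<in> {pt t' j i \<omega> | j i. j \<in> Sel t' \<omega> \<and> i < nb t' j \<omega>}"
        using nb1[OF j(2)] j(2) by (intro CollectI exI[of _ j] exI[of _ 0]) simp
      then have pS: "pt t' j 0 \<omega> \<in> S (Suc t') \<omega>" using SS[of t'] by blast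
      have "dist (pt t' j 0 \<omega>) x \<le> diameter (Reg k \<omega>)"
        using diameter_bounded_bound[OF hyperrect_props(5)[OF hr[OF k(1)]] p k(2)] .
      then have "dist (pt t' j 0 \<omega>) x < e" using k(3) by linarith
      then show ?thesis using pS by blast
    qed
    have "(\<lambda>t. measure lebesgue (DS r (F ` S t \<omega>))) \<longlonglongrightarrow> measure lebesgue (DS r (F ` X))"
      by (rule hv_conv[OF cX Fc Sinc Sfin Ssub dense])
    then show ?case using target unfolding hv_DS by simp
  qed
qed

end
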